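(* Let $n,k,m,r$ be positive integers. Then \begin{align*} r\,S_{\leq m}(n,k,r)&=\sum_{j=1}^{\min(m,\,n+2-k-r)}\binom{n}{j}S_{\leq m}(n-j,k,r-1),\\ n\,S_{\leq m}(n,k,r)&=\sum_{j=1}^{\min(m,\,n+2-k-r)}j\binom{n}{j}\Big[S_{\leq m}(n-j,k,r-1)+(k-1)S_{\leq m}(n-j,k-1,r)\Big], \end{align*} where the term $(k-1)S_{\leq m}(n-j,k-1,r)$ is $0$ when $k=1$.
   Context: For integers $N\ge 0$, $k\ge1$, $r\ge 0$, $m\ge1$, $S_{\leq m}(N,k,r)$ is the number of ways to partition $[N]=\{1,\dots,N\}$ into $r+k-1$ non-empty blocks, each of size at most $m$, where $r$ of the blocks receive the label $1$ (blocks with label $1$ are indistinguishable among themselves) and the remaining $k-1$ blocks receive the distinct labels $2,3,\dots,k$. *)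

theory Defs
  imports Main "HOL-Library.Disjoint_Sets" "HOL-Library.FuncSet"
begin

definition labelled_partitions :: "nat \<Rightarrow> nat \<Rightarrow> nat \<Rightarrow> nat \<Rightarrow> (nat set set \<times> (nat set \<Rightarrow> nat)) set" where
  "labelled_partitions m N k r =
     {(P, g). partition_on {1..N} P \<and> card P = r + k - 1 \<and> (\<forall>B\<in>P. card B \<le> m)
        \<and> g \<in> P \<rightarrow>\<^sub>E {1..k}
        \<and> card {B\<in>P. g B = 1} = r
        \<and> bij_betw g {B\<in>P. g B \<noteq> 1} {2..k}}"

definition S_le :: "nat \<Rightarrow> nat \<Rightarrow> nat \<Rightarrow> nat \<Rightarrow> nat" where
  "S_le m N k r = card (labelled_partitions m N k r)"

end

theory Submission
  imports Defs
begin

fun T :: "nat \<Rightarrow> nat \<Rightarrow> nat \<Rightarrow> nat" where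
  "T m n 0 = (if n = 0 then 1 else 0)"
| "T m n (Suc b) = (\<Sum>j = 1..m. (n choose j) * T m (n - j) b)"

lemma T_small: "n < b \<Longrightarrow> T m n b = 0"
proof (induction b arbitrary: n)
  case 0 then show ?case by simp
next
  case (Suc b)
  have "(n choose j) * T m (n - j) b = 0" if "j \<in> {1..m}" for j
  proof (cases "j \<le> n")
    case True then have "n - j < b" using Suc.prems that by auto
    then show ?thesis using Suc.IH by simp
  qed simp
  then show ?case by simp
qed

lemma choose_swap: "(n choose j) * ((n - j) choose i) = (n choose i) * ((n - i) choose (j::nat))"
proof (cases "i + j \<le> n")
  case True
  have 1: "(n choose (i+j)) * ((i+j) choose j) = (n choose j) * ((n - j) choose i)"
    using choose_mult[of j "i+j" n] True by simp
  have 2: "(n choose (i+j)) * ((i+j) choose i) = (n choose i) * ((n - i) choose j)"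
    using choose_mult[of i "i+j" n] True by simp
  have "((i+j) choose j) = ((i+j) choose i)"
    using binomial_symmetric[of j "i+j"] by simp
  then show ?thesis using 1 2 by simp
next
  case False
  have "(n choose j) * ((n - j) choose i) = 0"
    by (cases "j \<le> n") (use False in auto)
  moreover have "(n choose i) * ((n - i) choose j) = 0"
    by (cases "i \<le> n") (use False in auto)
  ultimately show ?thesis by metis
qed

lemma T_weighted: "n * T m n (Suc b) = Suc b * (\<Sum>j = 1..m. j * (n choose j) * T m (n - j) b)"
proof (induction b arbitrary: n)
  case 0
  have "n * ((n choose j) * T m (n - j) 0) = j * (n choose j) * T m (n - j) 0" for j
    by (cases "j \<le> n") auto
  then have "(\<Sum>j = 1..m. n * ((n choose j) * T m (n - j) 0)) = (\<Sum>j = 1..m. j * (n choose j) * T m (n - j) 0)"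
    by (intro sum.cong) auto
  then show ?case by (simp only: T.simps(2) sum_distrib_left) simp
next
  case (Suc b)
  define U where "U = (\<Sum>i = 1..m. i * (n choose i) * T m (n - i) (Suc b))"
  have split: "n * ((n choose j) * T m (n - j) (Suc b)) =
      j * (n choose j) * T m (n - j) (Suc b) + (n choose j) * ((n - j) * T m (n - j) (Suc b))" for j
  proof (cases "j \<le> n")
    case True
    then have "n = j + (n - j)" by simp
    then show ?thesis by (metis add_mult_distrib mult.assoc mult.left_commute)
  qed simp
  have "n * T m n (Suc (Suc b)) = (\<Sum>j = 1..m. n * ((n choose j) * T m (n - j) (Suc b)))"
    by (simp add: sum_distrib_left)
  also have "\<dots> = U + (\<Sum>j = 1..m. (n choose j) * ((n - j) * T m (n - j) (Suc b)))"
    unfolding U_def split by (simp add: sum.distrib)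
  also have "(\<Sum>j = 1..m. (n choose j) * ((n - j) * T m (n - j) (Suc b)))
      = Suc b * (\<Sum>j = 1..m. \<Sum>i = 1..m. i * ((n choose j) * ((n - j) choose i)) * T m (n - j - i) b)"
  proof -
    have "(n choose j) * ((n - j) * T m (n - j) (Suc b)) = Suc b * (\<Sum>i = 1..m. i * ((n choose j) * ((n - j) choose i)) * T m (n - j - i) b)" for j
      by (simp only: Suc.IH sum_distrib_left mult_ac)
    then show ?thesis by (simp only: sum_distrib_left)
  qed
  also have "(\<Sum>j = 1..m. \<Sum>i = 1..m. i * ((n choose j) * ((n - j) choose i)) * T m (n - j - i) b)
      = (\<Sum>i = 1..m. \<Sum>j = 1..m. i * ((n choose i) * ((n - i) choose j)) * T m (n - i - j) b)"
    by (subst sum.swap) (intro sum.cong refl, simp only: choose_swap[of n] diff_commute[of n])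
  also have "\<dots> = U"
    unfolding U_def by (simp add: sum_distrib_left mult_ac)
  finally have "n * T m n (Suc (Suc b)) = U + Suc b * U" .
  then show ?case by (simp only: U_def mult_Suc)
qed

definition LP :: "nat \<Rightarrow> nat set \<Rightarrow> nat \<Rightarrow> nat \<Rightarrow> (nat set set \<times> (nat set \<Rightarrow> nat)) set" where
  "LP m A k r =
     {(P, g). partition_on A P \<and> card P = r + k - 1 \<and> (\<forall>B\<in>P. card B \<le> m)
        \<and> g \<in> P \<rightarrow>\<^sub>E {1..k}
        \<and> card {B\<in>P. g B = 1} = r
        \<and> bij_betw g {B\<in>P. g B \<noteq> 1} {2..k}}"

lemma S_le_LP: "S_le m N k r = card (LP m {1..N} k r)"
  by (simp add: S_le_def LP_def labelled_partitions_def)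

lemma finite_LP: assumes "finite A" shows "finite (LP m A k r)"
proof (rule finite_subset)
  show "LP m A k r \<subseteq> Sigma {P. partition_on A P} (\<lambda>P. P \<rightarrow>\<^sub>E {1..k})"
    by (auto simp: LP_def)
  show "finite (Sigma {P. partition_on A P} (\<lambda>P. P \<rightarrow>\<^sub>E {1..k}))"
    using assms finitely_many_partition_on finite_elements
    by (intro finite_SigmaI finite_PiE) auto
qed

lemma sum_subsets:
  assumes "finite A"
  shows "(\<Sum>B\<in>{B. B \<subseteq> A \<and> B \<noteq> {} \<and> card B \<le> m}. f (card (A - B)))
         = (\<Sum>j=1..m. (card A choose j) * f (card A - j))"
proof -
  have eq: "{B. B \<subseteq> A \<and> B \<noteq> {} \<and> card B \<le> m} = (\<Union>j\<in>{1..m}. {B. B \<subseteq> A \<and> card B = j})"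
    using assms by (auto simp: finite_subset Suc_le_eq card_gt_0_iff)
  have "(\<Sum>B\<in>{B. B \<subseteq> A \<and> B \<noteq> {} \<and> card B \<le> m}. f (card (A - B)))
      = (\<Sum>j=1..m. \<Sum>B\<in>{B. B \<subseteq> A \<and> card B = j}. f (card (A - B)))"
    unfolding eq using assms
    by (intro sum.UNION_disjoint) (auto intro: finite_subset)
  also have "\<dots> = (\<Sum>j=1..m. (card A choose j) * f (card A - j))"
  proof (intro sum.cong refl)
    fix j
    have "(\<Sum>B\<in>{B. B \<subseteq> A \<and> card B = j}. f (card (A - B))) = (\<Sum>B\<in>{B. B \<subseteq> A \<and> card B = j}. f (card A - j))"
      using assms by (intro sum.cong refl) (auto simp: card_Diff_subset finite_subset)
    also have "\<dots> = (card A choose j) * f (card A - j)"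
      using n_subsets[OF assms] by simp
    finally show "(\<Sum>B\<in>{B. B \<subseteq> A \<and> card B = j}. f (card (A - B))) = (card A choose j) * f (card A - j)" .
  qed
  finally show ?thesis .
qed

lemma partition_remove:
  assumes "partition_on A P" "B \<in> P"
  shows "partition_on (A - B) (P - {B})"
proof -
  have d: "disjnt B (\<Union>(P - {B}))"
    using assms partition_onD2[OF assms(1)] by (auto simp: disjnt_def pairwise_def disjoint_def)
  have "partition_on A (insert B (P - {B}))" using assms by (simp add: insert_absorb)
  then show ?thesis using partition_on_insert[OF d] by simp
qed

lemma partition_add:
  assumes "partition_on (A - B) Q" "B \<subseteq> A" "B \<noteq> {}"
  shows "partition_on A (insert B Q)" "B \<notin> Q"
proof -
  have u: "\<Union>Q = A - B" using partition_onD1[OF assms(1)] by simp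
  have d: "disjnt B (\<Union>Q)" unfolding u by (auto simp: disjnt_def)
  show "partition_on A (insert B Q)" using partition_on_insert[OF d] assms by simp
  show "B \<notin> Q" using u assms(2,3) by blast
qed


lemma LP_remove1:
  assumes "(P, g) \<in> LP m A k r" "B \<in> P" "g B = 1" "r \<ge> 1" "finite A"
  shows "(P - {B}, restrict g (P - {B})) \<in> LP m (A - B) k (r - 1)"
proof -
  have L: "partition_on A P" "card P = r + k - 1" "\<forall>B\<in>P. card B \<le> m" "g \<in> P \<rightarrow>\<^sub>E {1..k}"
     "card {B\<in>P. g B = 1} = r" "bij_betw g {B\<in>P. g B \<noteq> 1} {2..k}"
    using assms(1) unfolding LP_def by auto
  have fP: "finite P" using L finite_elements assms(5) by blast
  have c: "card (P - {B}) = (r - 1) + k - 1" using L assms(2,4) fP by simp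
  have e1: "{C \<in> P - {B}. restrict g (P - {B}) C = 1} = {C\<in>P. g C = 1} - {B}" by auto
  have c1: "card ({C\<in>P. g C = 1} - {B}) = r - 1" using L assms(2,3) fP by simp
  have e2: "{C \<in> P - {B}. restrict g (P - {B}) C \<noteq> 1} = {C\<in>P. g C \<noteq> 1}" using assms(3) by auto
  have b: "bij_betw (restrict g (P - {B})) {C\<in>P. g C \<noteq> 1} {2..k}"
    using L assms(3) by (subst bij_betw_cong[where g=g]) auto
  have f: "restrict g (P - {B}) \<in> (P - {B}) \<rightarrow>\<^sub>E {1..k}" using L(4) by auto
  show ?thesis unfolding LP_def mem_Collect_eq prod.case
    apply (intro conjI)
    subgoal using partition_remove[of A P B] L(1) assms(2) by simp
    subgoal using c .
    subgoal using L(3) by simp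
    subgoal using f .
    subgoal using e1 c1 by simp
    subgoal using e2 b by simp
    done
qed
lemma LP_insert1:
  assumes "(Q, h) \<in> LP m (A - B) k (r - 1)" "B \<subseteq> A" "B \<noteq> {}" "card B \<le> m" "r \<ge> 1" "k \<ge> 1" "finite A"
  shows "(insert B Q, h(B := 1)) \<in> LP m A k r"
proof -
  have L: "partition_on (A - B) Q" "card Q = r - 1 + k - 1" "\<forall>B\<in>Q. card B \<le> m" "h \<in> Q \<rightarrow>\<^sub>E {1..k}"
     "card {B\<in>Q. h B = 1} = r - 1" "bij_betw h {B\<in>Q. h B \<noteq> 1} {2..k}"
    using assms(1) unfolding LP_def by auto
  have fQ: "finite Q" using L finite_elements assms(7) by blast
  have p: "partition_on A (insert B Q)" using partition_add(1)[OF L(1) assms(2,3)] .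
  have nB: "B \<notin> Q" using partition_add(2)[OF L(1) assms(2,3)] .
  have c: "card (insert B Q) = r + k - 1" using L(2) fQ nB assms(5,6) by simp
  have e1: "{C \<in> insert B Q. (h(B := 1)) C = 1} = insert B {C\<in>Q. h C = 1}" by auto
  have c1: "card (insert B {C\<in>Q. h C = 1}) = r" using L(5) fQ nB assms(5) by simp
  have e2: "{C \<in> insert B Q. (h(B := 1)) C \<noteq> 1} = {C\<in>Q. h C \<noteq> 1}" using nB by auto
  have b: "bij_betw (h(B := 1)) {C\<in>Q. h C \<noteq> 1} {2..k}"
    using L(6) nB by (subst bij_betw_cong[where g=h]) auto
  have f: "h(B := 1) \<in> insert B Q \<rightarrow>\<^sub>E {1..k}" using L(4) assms(6) by (auto simp: PiE_def extensional_def Pi_def)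
  show ?thesis unfolding LP_def mem_Collect_eq prod.case
    apply (intro conjI)
    subgoal using p .
    subgoal using c .
    subgoal using L(3) assms(4) by simp
    subgoal using f .
    subgoal using e1 c1 by simp
    subgoal using e2 b by simp
    done
qed


lemma LP_remove2:
  assumes "(P, g) \<in> LP m A k 0" "B \<in> P" "g B = k" "k \<ge> 2" "finite A"
  shows "(P - {B}, restrict g (P - {B})) \<in> LP m (A - B) (k - 1) 0"
proof -
  have L: "partition_on A P" "card P = 0 + k - 1" "\<forall>B\<in>P. card B \<le> m" "g \<in> P \<rightarrow>\<^sub>E {1..k}"
     "card {B\<in>P. g B = 1} = 0" "bij_betw g {B\<in>P. g B \<noteq> 1} {2..k}"
    using assms(1) unfolding LP_def by auto
  have fP: "finite P" using L finite_elements assms(5) by blast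
  have c: "card (P - {B}) = 0 + (k - 1) - 1" using L(2) assms(2,4) fP by simp
  have emp: "{C\<in>P. g C = 1} = {}" using L(5) fP by simp
  have e1: "{C \<in> P - {B}. restrict g (P - {B}) C = 1} = {}" using emp by auto
  have Bin: "B \<in> {C\<in>P. g C \<noteq> 1}" using assms(2,3,4) by auto
  have gk: "g C \<noteq> k" if "C \<in> P" "C \<noteq> B" for C
  proof
    assume "g C = k"
    then have "C \<in> {C\<in>P. g C \<noteq> 1}" using that assms(4) by auto
    moreover have "inj_on g {C\<in>P. g C \<noteq> 1}" using L(6) bij_betw_def by blast
    ultimately have "C = B" using inj_onD[of g "{C\<in>P. g C \<noteq> 1}" C B] Bin \<open>g C = k\<close> assms(3) by simp
    then show False using that(2) by contradiction
  qed
  have e2: "{C \<in> P - {B}. restrict g (P - {B}) C \<noteq> 1} = {C\<in>P. g C \<noteq> 1} - {B}" by auto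
  have "bij_betw g ({C\<in>P. g C \<noteq> 1} - {B}) ({2..k} - {k})"
    using L(6) Bin assms(3,4) by (intro bij_betw_DiffI) auto
  moreover have "{2..k} - {k} = {2..k-1}" by auto
  ultimately have b: "bij_betw (restrict g (P - {B})) ({C\<in>P. g C \<noteq> 1} - {B}) {2..k-1}"
    by (subst bij_betw_cong[where g=g]) auto
  have f: "restrict g (P - {B}) \<in> (P - {B}) \<rightarrow>\<^sub>E {1..k-1}"
  proof -
    have "g C \<in> {1..k-1}" if "C \<in> P - {B}" for C
    proof -
      have "g C \<in> {1..k}" using PiE_mem[OF L(4)] that by blast
      then show ?thesis using gk[of C] that by auto
    qed
    then show ?thesis by (simp add: restrict_PiE_iff)
  qed
  show ?thesis unfolding LP_def mem_Collect_eq prod.case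
    apply (intro conjI)
    subgoal using partition_remove[of A P B] L(1) assms(2) by simp
    subgoal using c .
    subgoal using L(3) by simp
    subgoal using f .
    subgoal by (simp only: e1 card.empty)
    subgoal using e2 b by simp
    done
qed


lemma LP_insert2:
  assumes "(Q, h) \<in> LP m (A - B) (k - 1) 0" "B \<subseteq> A" "B \<noteq> {}" "card B \<le> m" "k \<ge> 2" "finite A"
  shows "(insert B Q, h(B := k)) \<in> LP m A k 0"
proof -
  have L: "partition_on (A - B) Q" "card Q = 0 + (k - 1) - 1" "\<forall>B\<in>Q. card B \<le> m" "h \<in> Q \<rightarrow>\<^sub>E {1..k-1}"
     "card {B\<in>Q. h B = 1} = 0" "bij_betw h {B\<in>Q. h B \<noteq> 1} {2..k-1}"
    using assms(1) unfolding LP_def by auto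
  have fQ: "finite Q" using L finite_elements assms(6) by blast
  have p: "partition_on A (insert B Q)" using partition_add(1)[OF L(1) assms(2,3)] .
  have nB: "B \<notin> Q" using partition_add(2)[OF L(1) assms(2,3)] .
  have c: "card (insert B Q) = 0 + k - 1" using L(2) fQ nB assms(5) by simp
  have emp: "{C\<in>Q. h C = 1} = {}" using L(5) fQ by simp
  have e1: "{C \<in> insert B Q. (h(B := k)) C = 1} = {}" using emp assms(5) nB by auto
  have e2: "{C \<in> insert B Q. (h(B := k)) C \<noteq> 1} = {C\<in>Q. h C \<noteq> 1} \<union> {B}" using nB assms(5) by auto
  have b0: "bij_betw (h(B := k)) {C\<in>Q. h C \<noteq> 1} {2..k-1}"
    using L(6) nB by (subst bij_betw_cong[where g=h]) auto
  have "bij_betw (h(B := k)) ({C\<in>Q. h C \<noteq> 1} \<union> {B}) ({2..k-1} \<union> {(h(B := k)) B})"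
    using nB by (intro notIn_Un_bij_betw b0) auto
  moreover have "{2..k-1} \<union> {(h(B := k)) B} = {2..k}" using assms(5) by auto
  ultimately have b: "bij_betw (h(B := k)) ({C\<in>Q. h C \<noteq> 1} \<union> {B}) {2..k}" by simp
  have f: "h(B := k) \<in> insert B Q \<rightarrow>\<^sub>E {1..k}" using L(4) assms(5) by (auto simp: PiE_def extensional_def Pi_def)
  show ?thesis unfolding LP_def mem_Collect_eq prod.case
    apply (intro conjI)
    subgoal using p .
    subgoal using c .
    subgoal using L(3) assms(4) by simp
    subgoal using f .
    subgoal by (simp only: e1 card.empty)
    subgoal using e2 b by simp
    done
qed

lemma LP_rec1:
  assumes fA: "finite A" and r: "r \<ge> 1" and k: "k \<ge> 1"
  shows "r * card (LP m A k r) = (\<Sum>B\<in>{B. B \<subseteq> A \<and> B \<noteq> {} \<and> card B \<le> m}. card (LP m (A - B) k (r - 1)))"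
proof -
  define Bs where "Bs = {B. B \<subseteq> A \<and> B \<noteq> {} \<and> card B \<le> m}"
  define X where "X = Sigma (LP m A k r) (\<lambda>x. {B \<in> fst x. snd x B = 1})"
  define Y where "Y = Sigma Bs (\<lambda>B. LP m (A - B) k (r - 1))"
  define F where "F = (\<lambda>((P :: nat set set, g :: nat set \<Rightarrow> nat), B :: nat set). (B, (P - {B}, restrict g (P - {B}))))"
  define G where "G = (\<lambda>(B :: nat set, (Q :: nat set set, h :: nat set \<Rightarrow> nat)). ((insert B Q, h(B := 1)), B))"
  have fL: "finite (LP m A k r)" using finite_LP[OF fA] .
  have fib: "finite {B \<in> fst x. snd x B = 1} \<and> card {B \<in> fst x. snd x B = 1} = r" if "x \<in> LP m A k r" for x
  proof -
    obtain P g where x: "x = (P, g)" by fastforce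
    have "partition_on A P" "card {B \<in> P. g B = 1} = r" using that unfolding x LP_def mem_Collect_eq prod.case by blast+
    then show ?thesis using x finite_elements[OF fA] by auto
  qed
  have "card X = (\<Sum>x\<in>LP m A k r. card {B \<in> fst x. snd x B = 1})"
    unfolding X_def by (rule card_SigmaI[OF fL]) (use fib in blast)
  also have "\<dots> = (\<Sum>x\<in>LP m A k r. r)" using fib by (intro sum.cong) auto
  finally have cX: "card X = r * card (LP m A k r)" by simp
  have fBs: "finite Bs" unfolding Bs_def by (rule finite_subset[of _ "Pow A"]) (use fA in blast)+
  have cY: "card Y = (\<Sum>B\<in>Bs. card (LP m (A - B) k (r - 1)))"
    unfolding Y_def by (rule card_SigmaI[OF fBs]) (use fA finite_LP in blast)
  have "bij_betw F X Y"
  proof (rule bij_betw_byWitness[where f' = G])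
    show "\<forall>a\<in>X. G (F a) = a"
    proof
      fix a assume "a \<in> X"
      then obtain P g B where a: "a = ((P, g), B)" "(P, g) \<in> LP m A k r" "B \<in> P" "g B = 1"
        unfolding X_def by auto
      have ge: "g \<in> P \<rightarrow>\<^sub>E {1..k}" using a(2) unfolding LP_def mem_Collect_eq prod.case by blast+
      have "(restrict g (P - {B}))(B := 1) = g"
      proof
        fix x show "((restrict g (P - {B}))(B := 1)) x = g x"
          using a(3,4) PiE_arb[OF ge, of x] by auto
      qed
      then show "G (F a) = a" using a(1,3) by (auto simp: F_def G_def insert_absorb)
    qed
    show "\<forall>a\<in>Y. F (G a) = a"
    proof
      fix a assume "a \<in> Y"
      then obtain B Q h where a: "a = (B, (Q, h))" "B \<in> Bs" "(Q, h) \<in> LP m (A - B) k (r - 1)"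
        unfolding Y_def by auto
      have L: "partition_on (A - B) Q" "h \<in> Q \<rightarrow>\<^sub>E {1..k}" using a(3) unfolding LP_def mem_Collect_eq prod.case by blast+
      have nB: "B \<notin> Q" using partition_add(2)[OF L(1)] a(2) by (auto simp: Bs_def)
      have "restrict (h(B := 1)) (insert B Q - {B}) = h"
      proof
        fix x show "restrict (h(B := 1)) (insert B Q - {B}) x = h x"
          using nB PiE_arb[OF L(2), of x] by auto
      qed
      then show "F (G a) = a" using a(1) nB by (auto simp: F_def G_def)
    qed
    show "F ` X \<subseteq> Y"
    proof
      fix b assume "b \<in> F ` X"
      then obtain P g B where a: "b = F ((P, g), B)" "(P, g) \<in> LP m A k r" "B \<in> P" "g B = 1"
        unfolding X_def by auto
      have L: "partition_on A P" "\<forall>B\<in>P. card B \<le> m" using a(2) unfolding LP_def mem_Collect_eq prod.case by blast+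
      have "B \<in> Bs" using L a(3) partition_onD1[OF L(1)] partition_onD3[OF L(1)] unfolding Bs_def by auto
      then show "b \<in> Y" using LP_remove1[OF a(2,3,4) r fA] a(1) unfolding Y_def F_def by auto
    qed
    show "G ` Y \<subseteq> X"
    proof
      fix b assume "b \<in> G ` Y"
      then obtain B Q h where a: "b = G (B, (Q, h))" "B \<in> Bs" "(Q, h) \<in> LP m (A - B) k (r - 1)"
        unfolding Y_def by auto
      have "B \<subseteq> A" "B \<noteq> {}" "card B \<le> m" using a(2) by (auto simp: Bs_def)
      from LP_insert1[OF a(3) this r k fA] show "b \<in> X" using a(1) unfolding X_def G_def by auto
    qed
  qed
  then have "card X = card Y" by (rule bij_betw_same_card)
  then show ?thesis using cX cY unfolding Bs_def by simp
qed

lemma LP_rec2: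
  assumes fA: "finite A" and k2: "k \<ge> 2"
  shows "card (LP m A k 0) = (\<Sum>B\<in>{B. B \<subseteq> A \<and> B \<noteq> {} \<and> card B \<le> m}. card (LP m (A - B) (k - 1) 0))"
proof -
  define Bs where "Bs = {B. B \<subseteq> A \<and> B \<noteq> {} \<and> card B \<le> m}"
  define X where "X = Sigma (LP m A k 0) (\<lambda>x. {B \<in> fst x. snd x B = k})"
  define Y where "Y = Sigma Bs (\<lambda>B. LP m (A - B) (k - 1) 0)"
  define F where "F = (\<lambda>((P :: nat set set, g :: nat set \<Rightarrow> nat), B :: nat set). (B, (P - {B}, restrict g (P - {B}))))"
  define G where "G = (\<lambda>(B :: nat set, (Q :: nat set set, h :: nat set \<Rightarrow> nat)). ((insert B Q, h(B := k)), B))"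
  have fL: "finite (LP m A k 0)" using finite_LP[OF fA] .
  have fib: "finite {B \<in> fst x. snd x B = k} \<and> card {B \<in> fst x. snd x B = k} = 1" if "x \<in> LP m A k 0" for x
  proof -
    obtain P g where x: "x = (P, g)" by fastforce
    have b: "bij_betw g {C \<in> P. g C \<noteq> 1} {2..k}" using that unfolding x LP_def mem_Collect_eq prod.case by blast+
    have "k \<in> {2..k}" using k2 by simp
    moreover have im: "g ` {C \<in> P. g C \<noteq> 1} = {2..k}" using b by (simp add: bij_betw_def)
    ultimately obtain B0 where B0': "B0 \<in> {C \<in> P. g C \<noteq> 1}" "k = g B0" unfolding im[symmetric] by blast
    have B0: "B0 \<in> {C \<in> P. g C \<noteq> 1}" "g B0 = k" using B0' by simp_all
    have inj: "inj_on g {C \<in> P. g C \<noteq> 1}" using b unfolding bij_betw_def by blast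
    have "{B \<in> P. g B = k} = {B0}"
    proof
      show "{B0} \<subseteq> {B \<in> P. g B = k}" using B0 by auto
      show "{B \<in> P. g B = k} \<subseteq> {B0}"
      proof
        fix B assume B: "B \<in> {B \<in> P. g B = k}"
        then have "B \<in> {C \<in> P. g C \<noteq> 1}" using k2 by auto
        then have "B = B0" using inj_onD[OF inj _ _ B0(1)] B B0(2) by simp
        then show "B \<in> {B0}" by simp
      qed
    qed
    then show ?thesis using x by simp
  qed
  have "card X = (\<Sum>x\<in>LP m A k 0. card {B \<in> fst x. snd x B = k})"
    unfolding X_def by (rule card_SigmaI[OF fL]) (use fib in blast)
  also have "\<dots> = (\<Sum>x\<in>LP m A k 0. 1)" using fib by (intro sum.cong) auto
  finally have cX: "card X = card (LP m A k 0)" by simp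
  have fBs: "finite Bs" unfolding Bs_def by (rule finite_subset[of _ "Pow A"]) (use fA in blast)+
  have cY: "card Y = (\<Sum>B\<in>Bs. card (LP m (A - B) (k - 1) 0))"
    unfolding Y_def by (rule card_SigmaI[OF fBs]) (use fA finite_LP in blast)
  have "bij_betw F X Y"
  proof (rule bij_betw_byWitness[where f' = G])
    show "\<forall>a\<in>X. G (F a) = a"
    proof
      fix a assume "a \<in> X"
      obtain P g B where a0: "a = ((P, g), B)" by (metis prod.collapse)
      have a: "a = ((P, g), B)" "(P, g) \<in> LP m A k 0" "B \<in> P" "g B = k"
        using \<open>a \<in> X\<close> unfolding X_def a0 mem_Sigma_iff mem_Collect_eq fst_conv snd_conv by blast+
      have ge: "g \<in> P \<rightarrow>\<^sub>E {1..k}" using a(2) unfolding LP_def mem_Collect_eq prod.case by blast+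
      have "(restrict g (P - {B}))(B := k) = g"
      proof
        fix x show "((restrict g (P - {B}))(B := k)) x = g x"
          using a(3,4) PiE_arb[OF ge, of x] by auto
      qed
      then show "G (F a) = a" using a(1,3) by (auto simp: F_def G_def insert_absorb)
    qed
    show "\<forall>a\<in>Y. F (G a) = a"
    proof
      fix a assume "a \<in> Y"
      then obtain B Q h where a: "a = (B, (Q, h))" "B \<in> Bs" "(Q, h) \<in> LP m (A - B) (k - 1) 0"
        unfolding Y_def by auto
      have L: "partition_on (A - B) Q" "h \<in> Q \<rightarrow>\<^sub>E {1..k-1}" using a(3) unfolding LP_def mem_Collect_eq prod.case by blast+
      have nB: "B \<notin> Q" using partition_add(2)[OF L(1)] a(2) by (auto simp: Bs_def)
      have "restrict (h(B := k)) (insert B Q - {B}) = h"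
      proof
        fix x show "restrict (h(B := k)) (insert B Q - {B}) x = h x"
          using nB PiE_arb[OF L(2), of x] by auto
      qed
      then show "F (G a) = a" using a(1) nB by (auto simp: F_def G_def)
    qed
    show "F ` X \<subseteq> Y"
    proof
      fix b assume "b \<in> F ` X"
      then obtain P g B where a: "b = F ((P, g), B)" "(P, g) \<in> LP m A k 0" "B \<in> P" "g B = k"
        unfolding X_def by auto
      have L: "partition_on A P" "\<forall>B\<in>P. card B \<le> m" using a(2) unfolding LP_def mem_Collect_eq prod.case by blast+
      have "B \<in> Bs" using L a(3) partition_onD1[OF L(1)] partition_onD3[OF L(1)] unfolding Bs_def by auto
      then show "b \<in> Y" using LP_remove2[OF a(2,3,4) k2 fA] a(1) unfolding Y_def F_def by auto
    qed
    show "G ` Y \<subseteq> X"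
    proof
      fix b assume "b \<in> G ` Y"
      then obtain B Q h where a: "b = G (B, (Q, h))" "B \<in> Bs" "(Q, h) \<in> LP m (A - B) (k - 1) 0"
        unfolding Y_def by auto
      have "B \<subseteq> A" "B \<noteq> {}" "card B \<le> m" using a(2) by (auto simp: Bs_def)
      from LP_insert2[OF a(3) this k2 fA] show "b \<in> X" using a(1) unfolding X_def G_def by auto
    qed
  qed
  then have "card X = card Y" by (rule bij_betw_same_card)
  then show ?thesis using cX cY unfolding Bs_def by simp
qed



lemma LP_base:
  assumes fA: "finite A"
  shows "card (LP m A 1 0) = T m (card A) 0"
proof -
  have sub: "LP m A 1 0 \<subseteq> {({}, \<lambda>_. undefined)}"
  proof
    fix x assume x: "x \<in> LP m A 1 0"
    obtain P g where xe: "x = (P, g)" by fastforce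
    have L: "partition_on A P" "card P = 0" "g \<in> P \<rightarrow>\<^sub>E {1..1}"
      using x unfolding xe LP_def mem_Collect_eq prod.case by simp_all
    have "finite P" using finite_elements[OF fA L(1)] .
    then have "P = {}" using L(2) by simp
    moreover have "g = (\<lambda>_. undefined)"
    proof
      fix y show "g y = undefined" using PiE_arb[OF L(3), of y] \<open>P = {}\<close> by simp
    qed
    ultimately show "x \<in> {({}, \<lambda>_. undefined)}" using xe by simp
  qed
  show ?thesis
  proof (cases "A = {}")
    case True
    have "({}, \<lambda>_. undefined) \<in> LP m A 1 0"
      unfolding LP_def mem_Collect_eq prod.case True by (simp add: partition_on_empty restrict_def bij_betw_def)
    then have "LP m A 1 0 = {({}, \<lambda>_. undefined)}" using sub by blast
    then show ?thesis using True by simp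
  next
    case False
    have "LP m A 1 0 = {}"
    proof (rule ccontr)
      assume "LP m A 1 0 \<noteq> {}"
      then have "({}, \<lambda>_. undefined) \<in> LP m A 1 0" using sub by blast
      then have "partition_on A {}" unfolding LP_def mem_Collect_eq prod.case by blast
      then show False using False partition_onD1 by fastforce
    qed
    then show ?thesis using False fA by simp
  qed
qed

lemma LP_closed0:
  "finite A \<Longrightarrow> k \<ge> 1 \<Longrightarrow> card (LP m A k 0) = T m (card A) (k - 1)"
proof (induction k arbitrary: A)
  case 0 then show ?case by simp
next
  case (Suc k)
  show ?case
  proof (cases "k = 0")
    case True then show ?thesis using LP_base[OF Suc.prems(1)] by simp
  next
    case False
    have "card (LP m A (Suc k) 0) = (\<Sum>B\<in>{B. B \<subseteq> A \<and> B \<noteq> {} \<and> card B \<le> m}. card (LP m (A - B) k 0))"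
      using LP_rec2[OF Suc.prems(1), of "Suc k" m] False by simp
    also have "\<dots> = (\<Sum>B\<in>{B. B \<subseteq> A \<and> B \<noteq> {} \<and> card B \<le> m}. T m (card (A - B)) (k - 1))"
      using Suc.IH Suc.prems(1) False by (intro sum.cong refl) simp
    also have "\<dots> = (\<Sum>j=1..m. (card A choose j) * T m (card A - j) (k - 1))"
      by (rule sum_subsets[OF Suc.prems(1)])
    also have "\<dots> = T m (card A) (Suc (k - 1))" by simp
    finally show ?thesis using False by simp
  qed
qed

lemma LP_closed:
  "finite A \<Longrightarrow> k \<ge> 1 \<Longrightarrow> card (LP m A k r) * fact r = T m (card A) (r + k - 1)"
proof (induction r arbitrary: A)
  case 0 then show ?case using LP_closed0 by simp
next
  case (Suc r)
  have "card (LP m A k (Suc r)) * fact (Suc r) = (Suc r * card (LP m A k (Suc r))) * fact r"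
    by (simp add: algebra_simps)
  also have "\<dots> = (\<Sum>B\<in>{B. B \<subseteq> A \<and> B \<noteq> {} \<and> card B \<le> m}. card (LP m (A - B) k r)) * fact r"
    using LP_rec1[OF Suc.prems(1) _ Suc.prems(2), of "Suc r" m] by simp
  also have "\<dots> = (\<Sum>B\<in>{B. B \<subseteq> A \<and> B \<noteq> {} \<and> card B \<le> m}. card (LP m (A - B) k r) * fact r)"
    by (simp add: sum_distrib_right)
  also have "\<dots> = (\<Sum>B\<in>{B. B \<subseteq> A \<and> B \<noteq> {} \<and> card B \<le> m}. T m (card (A - B)) (r + k - 1))"
    using Suc.IH Suc.prems by (intro sum.cong refl) simp
  also have "\<dots> = (\<Sum>j=1..m. (card A choose j) * T m (card A - j) (r + k - 1))"
    by (rule sum_subsets[OF Suc.prems(1)])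
  also have "\<dots> = T m (card A) (Suc (r + k - 1))" by simp
  finally show ?case using Suc.prems(2) by simp
qed

lemma S_closed: "k \<ge> 1 \<Longrightarrow> S_le m N k r * fact r = T m N (r + k - 1)"
  using LP_closed[of "{1..N}" k m r] by (simp add: S_le_LP)

theorem mainTheorem5:
  fixes n k m r :: nat
  assumes "n \<ge> 1" "k \<ge> 1" "m \<ge> 1" "r \<ge> 1"
  shows "(r * S_le m n k r =
           (\<Sum>j = 1..min m (n + 2 - k - r). (n choose j) * S_le m (n - j) k (r - 1))) \<and>
         (n * S_le m n k r =
           (\<Sum>j = 1..min m (n + 2 - k - r). j * (n choose j) *
              (S_le m (n - j) k (r - 1) + (k - 1) * S_le m (n - j) (k - 1) r)))"
proof -
  define b where "b = r - 1 + k - 1"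
  define c where "c = min m (n + 2 - k - r)"
  have van: "(n choose j) * T m (n - j) b = 0" if "j \<in> {1..m} - {1..c}" for j
  proof (cases "j \<le> n")
    case True
    have "n - j < b" using that True assms unfolding c_def b_def by auto
    then show ?thesis using T_small by simp
  qed simp
  have ext: "(\<Sum>j=1..m. w j * ((n choose j) * T m (n - j) b)) = (\<Sum>j=1..c. w j * ((n choose j) * T m (n - j) b))" for w :: "nat \<Rightarrow> nat"
    by (rule sum.mono_neutral_right) (use van in \<open>auto simp: c_def\<close>)
  have S1: "S_le m (n - j) k (r - 1) * fact (r - 1) = T m (n - j) b" for j
    using S_closed[of k m "n - j" "r - 1"] assms unfolding b_def by simp
  have S2: "(k - 1) * (S_le m (n - j) (k - 1) r * fact r) = (k - 1) * T m (n - j) b" for j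
  proof (cases "k \<ge> 2")
    case True
    then show ?thesis using S_closed[of "k - 1" m "n - j" r] assms unfolding b_def by simp
  next
    case False then have "k = 1" using assms by simp
    then show ?thesis by simp
  qed
  have fr: "fact r = r * (fact (r - 1) :: nat)" using assms(4) by (cases r) auto
  have Tn: "S_le m n k r * fact r = T m n (Suc b)"
  proof -
    have e: "r + k - 1 = Suc b" using assms unfolding b_def by simp
    show ?thesis using S_closed[OF assms(2), of m n r] unfolding e .
  qed
  have rb: "r + (k - 1) = Suc b" using assms unfolding b_def by simp
  have id1: "r * S_le m n k r = (\<Sum>j = 1..c. (n choose j) * S_le m (n - j) k (r - 1))"
  proof -
    have "(r * S_le m n k r) * fact (r - 1) = S_le m n k r * fact r" using fr by simp
    also have "\<dots> = (\<Sum>j=1..m. 1 * ((n choose j) * T m (n - j) b))" using Tn by simp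
    also have "\<dots> = (\<Sum>j=1..c. 1 * ((n choose j) * T m (n - j) b))" by (rule ext)
    also have "\<dots> = (\<Sum>j = 1..c. (n choose j) * S_le m (n - j) k (r - 1)) * fact (r - 1)"
      unfolding sum_distrib_right using S1 by (simp add: mult_ac)
    finally show ?thesis by simp
  qed
  have id2: "n * S_le m n k r = (\<Sum>j = 1..c. j * (n choose j) *
              (S_le m (n - j) k (r - 1) + (k - 1) * S_le m (n - j) (k - 1) r))"
  proof -
    have "(n * S_le m n k r) * fact r = n * T m n (Suc b)" using Tn by simp
    also have "\<dots> = Suc b * (\<Sum>j=1..m. j * ((n choose j) * T m (n - j) b))"
      using T_weighted[of n m b] by (simp add: mult_ac)
    also have "\<dots> = Suc b * (\<Sum>j=1..c. j * ((n choose j) * T m (n - j) b))" using ext by simp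
    also have "\<dots> = (\<Sum>j = 1..c. j * (n choose j) *
              (S_le m (n - j) k (r - 1) + (k - 1) * S_le m (n - j) (k - 1) r)) * fact r"
    proof -
      have "j * (n choose j) * (S_le m (n - j) k (r - 1) + (k - 1) * S_le m (n - j) (k - 1) r) * fact r
          = Suc b * (j * ((n choose j) * T m (n - j) b))" for j
      proof -
        have "(S_le m (n - j) k (r - 1) + (k - 1) * S_le m (n - j) (k - 1) r) * fact r
            = r * (S_le m (n - j) k (r - 1) * fact (r - 1)) + (k - 1) * (S_le m (n - j) (k - 1) r * fact r)"
          using fr by (simp add: algebra_simps)
        also have "\<dots> = (r + (k - 1)) * T m (n - j) b" using S1 S2 by (simp add: algebra_simps)
        finally have h: "(S_le m (n - j) k (r - 1) + (k - 1) * S_le m (n - j) (k - 1) r) * fact r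
            = Suc b * T m (n - j) b" unfolding rb .
        have "j * (n choose j) * (S_le m (n - j) k (r - 1) + (k - 1) * S_le m (n - j) (k - 1) r) * fact r
            = (j * (n choose j)) * ((S_le m (n - j) k (r - 1) + (k - 1) * S_le m (n - j) (k - 1) r) * fact r)"
          by (simp only: mult.assoc)
        also have "\<dots> = (j * (n choose j)) * (Suc b * T m (n - j) b)" by (simp only: h)
        also have "\<dots> = Suc b * (j * ((n choose j) * T m (n - j) b))" by (simp only: mult_ac)
        finally show ?thesis .
      qed
      then show ?thesis by (simp add: sum_distrib_right sum_distrib_left)
    qed
    finally show ?thesis by simp
  qed
  show ?thesis using id1 id2 unfolding c_def by simp
qed

end
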